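(* Let $G=(V,E)$ be an infinite, locally finite, connected weighted graph (as described in the context). Assume that there exist a vertex $x_0\in V$ and a constant $C\geq 0$ such that $H(x)\leq C$ for all $x\in V$, where $H$ is the mean curvature function with respect to $x_0$. Let $v_0:V\to(0,\infty)$ be a bounded positive function. Then any bounded positive solution $v(t,x)$ of $$v_t=\Delta \log v \quad \text{on } (0,\infty)\times V$$ with initial data $v(0,\cdot)=v_0$ satisfies $$\sup_{x\in V} v(t,x)\leq \sup_{x\in V} v_0(x)\quad\text{for every } t\geq 0.$$
   Context: $G=(V,E)$ is an infinite, locally finite, connected graph without loops or multiple edges; $x\sim y$ means $x$ and $y$ are joined by an edge. Each edge $x\sim y$ carries a symmetric weight $\mu_{xy}=\mu_{yx}\geq 0$, with $d_x:=\sum_{y\sim x}\mu_{xy}>0$ for every $x\in V$. For $f:V\to\mathbb{R}$ the Laplacian is $\Delta f(x)=\frac{1}{d_x}\sum_{y\sim x}\mu_{xy}(f(y)-f(x))$. Fix $x_0\in V$ and let $r(x)=d(x,x_0)$ be the graph distance to $x_0$. The mean curvature is $H(x)=\Delta r(x)=\frac{d_+(x)-d_-(x)}{d_x}$, where $d_\pm(x)=\sum_{y\sim x,\ r(y)=r(x)\pm 1}\mu_{xy}$. A solution $v(t,x)$ is a function on $[0,\infty)\times V$, differentiable in $t$ for each fixed $x$, satisfying the equation pointwise for $t>0$ (with $\Delta$ acting in the $x$ variable); "bounded" means bounded on $[0,\infty)\times V$. *)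

theory Defs
  imports "HOL-Analysis.Analysis"
begin

text \<open>A weighted graph on the vertex type 'a: adjacency relation E (x \<sim> y) and edge
weights mu.  The vertex set V is the whole type 'a.\<close>

definition weighted_graph :: "('a \<Rightarrow> 'a \<Rightarrow> bool) \<Rightarrow> ('a \<Rightarrow> 'a \<Rightarrow> real) \<Rightarrow> bool" where
  "weighted_graph E mu \<longleftrightarrow>
     infinite (UNIV :: 'a set) \<and>
     (\<forall>x. \<not> E x x) \<and>
     (\<forall>x y. E x y \<longrightarrow> E y x) \<and>
     (\<forall>x. finite {y. E x y}) \<and>
     (\<forall>x y. E\<^sup>*\<^sup>* x y) \<and>
     (\<forall>x y. E x y \<longrightarrow> mu x y = mu y x \<and> mu x y \<ge> 0) \<and>
     (\<forall>x. (\<Sum>y\<in>{y. E x y}. mu x y) > 0)"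

definition wdeg :: "('a \<Rightarrow> 'a \<Rightarrow> bool) \<Rightarrow> ('a \<Rightarrow> 'a \<Rightarrow> real) \<Rightarrow> 'a \<Rightarrow> real" where
  "wdeg E mu x = (\<Sum>y\<in>{y. E x y}. mu x y)"

definition glaplacian :: "('a \<Rightarrow> 'a \<Rightarrow> bool) \<Rightarrow> ('a \<Rightarrow> 'a \<Rightarrow> real) \<Rightarrow> ('a \<Rightarrow> real) \<Rightarrow> 'a \<Rightarrow> real" where
  "glaplacian E mu f x = (1 / wdeg E mu x) * (\<Sum>y\<in>{y. E x y}. mu x y * (f y - f x))"

definition gdist :: "('a \<Rightarrow> 'a \<Rightarrow> bool) \<Rightarrow> 'a \<Rightarrow> 'a \<Rightarrow> nat" where
  "gdist E x y = (LEAST n. (E ^^ n) x y)"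

definition mean_curv :: "('a \<Rightarrow> 'a \<Rightarrow> bool) \<Rightarrow> ('a \<Rightarrow> 'a \<Rightarrow> real) \<Rightarrow> 'a \<Rightarrow> 'a \<Rightarrow> real" where
  "mean_curv E mu x0 x = glaplacian E mu (\<lambda>z. real (gdist E z x0)) x"

end

theory Submission
  imports Defs
begin

lemma fin_pow:
  assumes sym: "\<forall>x y. E x y \<longrightarrow> E y x" and fin: "\<forall>x. finite {y. E x y}"
  shows "finite {x. (E^^n) x z}"
proof (induction n arbitrary: z)
  case 0 then show ?case by simp
next
  case (Suc n)
  have "{x. (E^^Suc n) x z} \<subseteq> (\<Union>y\<in>{y. E z y}. {x. (E^^n) x y})"
    using sym by auto
  moreover have "finite (\<Union>y\<in>{y. E z y}. {x. (E^^n) x y})"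
    using fin Suc by auto
  ultimately show ?case by (rule finite_subset)
qed

lemma fin_ball:
  assumes "weighted_graph E mu"
  shows "finite {x. gdist E x z \<le> N}"
proof -
  have sym: "\<forall>x y. E x y \<longrightarrow> E y x" and fin: "\<forall>x. finite {y. E x y}"
    and conn: "\<forall>x y. E\<^sup>*\<^sup>* x y" using assms unfolding weighted_graph_def by auto
  have "{x. gdist E x z \<le> N} \<subseteq> (\<Union>n\<in>{..N}. {x. (E^^n) x z})"
  proof
    fix x assume xin: "x \<in> {x. gdist E x z \<le> N}"
    have "\<exists>n. (E^^n) x z" using conn rtranclp_power by metis
    hence "(E^^gdist E x z) x z" unfolding gdist_def by (rule LeastI_ex)
    thus "x \<in> (\<Union>n\<in>{..N}. {x. (E^^n) x z})" using xin by auto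
  qed
  then show ?thesis using fin_pow[OF sym fin] by (meson finite_UN_I finite_atMost finite_subset)
qed

theorem theorem2:
  fixes E :: "'a \<Rightarrow> 'a \<Rightarrow> bool" and mu :: "'a \<Rightarrow> 'a \<Rightarrow> real"
    and x0 :: 'a and C :: real
    and v0 :: "'a \<Rightarrow> real" and v :: "real \<Rightarrow> 'a \<Rightarrow> real"
  assumes G: "weighted_graph E mu"
    and C: "C \<ge> 0" "\<forall>x. mean_curv E mu x0 x \<le> C"
    and v0_pos: "\<forall>x. v0 x > 0" and v0_bdd: "\<exists>B. \<forall>x. v0 x \<le> B"
    and v_diff: "\<forall>x. \<forall>t\<ge>0. (\<lambda>s. v s x) differentiable (at t within {0..})"
    and v_eq: "\<forall>x. \<forall>t>0. ((\<lambda>s. v s x) has_real_derivative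
                   glaplacian E mu (\<lambda>y. ln (v t y)) x) (at t)"
    and v_pos: "\<forall>t\<ge>0. \<forall>x. v t x > 0"
    and v_bdd: "\<exists>B. \<forall>t\<ge>0. \<forall>x. \<bar>v t x\<bar> \<le> B"
    and v_init: "\<forall>x. v 0 x = v0 x"
  shows "\<forall>t\<ge>0. (SUP x. v t x) \<le> (SUP x. v0 x)"
proof -
  from G have mu_nonneg: "\<forall>x y. E x y \<longrightarrow> mu x y \<ge> 0" and dpos: "\<forall>x. wdeg E mu x > 0"
    unfolding weighted_graph_def wdeg_def by auto
  define M where "M = (SUP x. v0 x)"
  have bdd0: "bdd_above (range v0)" using v0_bdd by (auto simp: bdd_above_def)
  have v0M: "\<forall>x. v0 x \<le> M" unfolding M_def using bdd0 by (auto intro: cSUP_upper)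
  have Mpos: "M > 0" using v0M v0_pos by (meson less_le_trans)
  define r where "r x = real (gdist E x x0)" for x
  define K where "K = C / M + 1"
  have Kpos: "K > 0" unfolding K_def using C Mpos by (simp add: add_nonneg_pos)
  obtain B where B: "\<forall>t\<ge>0. \<forall>x. \<bar>v t x\<bar> \<le> B" using v_bdd by auto
  have cont_pos: "\<forall>x. \<forall>t>0. isCont (\<lambda>s. v s x) t" using v_eq DERIV_isCont by blast
  have cont0: "\<forall>x. continuous (at 0 within {0..}) (\<lambda>s. v s x)"
    using v_diff differentiable_imp_continuous_within by (metis order_refl)
  have key: "v t x \<le> M + e * (r x + K*t + 1)" if e: "e > 0" and t: "t \<ge> 0" for e t x
  proof (rule ccontr)
    assume neg: "\<not> ?thesis"
    define ph where "ph a b = v a b - e * (r b + K * a + 1)" for a b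
    define F where "F = {y. r y \<le> B/e}"
    have "F \<subseteq> {y. gdist E y x0 \<le> nat \<lceil>B/e\<rceil>}"
      unfolding F_def r_def by (auto simp: le_nat_iff) (metis ceiling_mono ceiling_of_nat)
    hence finF: "finite F" using fin_ball[OF G] finite_subset by blast
    have outF: "ph s y < M" if "s \<ge> 0" "y \<notin> F" for s y
    proof -
      have "e * r y > B" using that e unfolding F_def by (simp add: field_simps)
      moreover have "v s y \<le> B" using B that by (meson abs_le_D1)
      moreover have "e * (K * s + 1) > 0" using e Kpos that by (simp add: add_nonneg_pos)
      ultimately show ?thesis unfolding ph_def using Mpos by (simp add: algebra_simps)
    qed
    define T where "T y = {s. s \<ge> 0 \<and> ph s y > M}" for y
    have tT: "t \<in> T x" using neg t unfolding T_def ph_def by auto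
    have xF: "x \<in> F" using outF tT t unfolding T_def by force
    let ?I = "{y \<in> F. T y \<noteq> {}}"
    have Ine: "?I \<noteq> {}" using xF tT by auto
    have Ifin: "finite ?I" using finF by auto
    define m where "m = Min ((\<lambda>y. Inf (T y)) ` ?I)"
    have "m \<in> (\<lambda>y. Inf (T y)) ` ?I" unfolding m_def using Ine Ifin by (intro Min_in) auto
    then obtain z where zI: "z \<in> ?I" and zm: "Inf (T z) = m" by auto
    have zmin: "\<forall>y\<in>?I. Inf (T z) \<le> Inf (T y)" unfolding zm m_def using Ifin by auto
    define ts where "ts = Inf (T z)"
    have ph0: "ph 0 y < M" for y
    proof -
      have "e * (r y + K * 0 + 1) > 0" using e unfolding r_def by (simp add: add_nonneg_pos)
      moreover have "v 0 y \<le> M" using v_init v0M by simp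
      ultimately show ?thesis unfolding ph_def by linarith
    qed
    have ev0: "eventually (\<lambda>s. \<forall>y\<in>F. ph s y < M) (at 0 within {0..})"
    proof (rule eventually_ball_finite[OF finF], rule ballI)
      fix y assume "y\<in>F"
      have "continuous (at 0 within {0..}) (\<lambda>s. ph s y)" unfolding ph_def using cont0
        by (intro continuous_intros) auto
      moreover have "ph 0 y < M" by (rule ph0)
      ultimately show "eventually (\<lambda>s. ph s y < M) (at 0 within {0..})"
        using order_tendstoD(2) continuous_within by blast
    qed
    then obtain d where d: "d > 0" "\<forall>s\<in>{0..}. s \<noteq> 0 \<and> dist s 0 < d \<longrightarrow> (\<forall>y\<in>F. ph s y < M)"
      by (auto simp: eventually_at)
    have small: "ph s y < M" if "0 \<le> s" "s < d" for s y
    proof (cases "y \<in> F")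
      case True
      show ?thesis
      proof (cases "s = 0")
        case True
        then show ?thesis using ph0 by simp
      next
        case False
        then show ?thesis using d that \<open>y \<in> F\<close> by (auto simp: dist_real_def)
      qed
    next
      case False then show ?thesis using outF that by auto
    qed
    have Tge: "\<forall>s\<in>T y. s \<ge> d" for y using small unfolding T_def by (metis (mono_tags) mem_Collect_eq not_le order.asym)
    have Tbdd: "bdd_below (T y)" for y unfolding T_def by (auto simp: bdd_below_def)
    have tsd: "ts \<ge> d" unfolding ts_def using zI Tge by (auto intro: cInf_greatest)
    have tspos: "ts > 0" using tsd d by auto
    have contphi: "isCont (\<lambda>s. ph s y) s" if "s > 0" for s y
      unfolding ph_def using cont_pos that by (intro continuous_intros) auto
    have allle: "ph ts y \<le> M" for y
    proof (rule ccontr)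
      assume "\<not> ph ts y \<le> M"
      hence gt: "ph ts y > M" by simp
      then have yF: "y \<in> F" using outF tspos by (meson less_imp_le order.asym)
      from contphi[OF tspos] gt have "eventually (\<lambda>s. ph s y > M) (at ts)"
        by (metis isCont_def order_tendstoD(1))
      then obtain d2 where d2: "d2>0" "\<forall>s. s \<noteq> ts \<and> dist s ts < d2 \<longrightarrow> ph s y > M"
        by (auto simp: eventually_at)
      define s where "s = ts - min d2 ts / 2"
      have mpos: "min d2 ts > 0" using d2 tspos by simp
      have s1: "s < ts" unfolding s_def using mpos by simp
      have s2: "s \<ge> 0" unfolding s_def using min.cobounded2[of d2 ts] tspos by linarith
      have s3: "\<bar>s - ts\<bar> < d2" unfolding s_def using mpos min.cobounded1[of d2 ts] by (simp add: abs_if) linarith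
      have "s \<noteq> ts" "\<bar>s - ts\<bar> < d2" "s \<ge> 0" using s1 s2 s3 by auto
      hence "s \<in> T y" unfolding T_def using d2(2) by (simp add: dist_real_def)
      hence "y \<in> ?I" using yF by auto
      hence "ts \<le> Inf (T y)" using zmin ts_def by auto
      also have "Inf (T y) \<le> s" by (rule cInf_lower[OF \<open>s\<in>T y\<close> Tbdd])
      finally show False using s1 by simp
    qed
    have near: "\<exists>s\<in>T z. s < ts + d'" if "d' > 0" for d'
    proof -
      have "Inf (T z) < ts + d'" using that ts_def by simp
      then show ?thesis using cInf_less_iff[of "T z"] zI Tbdd by auto
    qed
    have tsnot: "ts \<notin> T z" using allle unfolding T_def by (auto simp: not_less)
    have sge: "s \<ge> ts" if "s \<in> T z" for s unfolding ts_def by (rule cInf_lower[OF that Tbdd])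
    have ge: "ph ts z \<ge> M"
    proof (rule ccontr)
      assume "\<not> ?thesis"
      hence lt: "ph ts z < M" by simp
      from contphi[OF tspos] lt have "eventually (\<lambda>s. ph s z < M) (at ts)"
        by (metis isCont_def order_tendstoD(2))
      then obtain d3 where d3: "d3>0" "\<forall>s. s \<noteq> ts \<and> dist s ts < d3 \<longrightarrow> ph s z < M"
        by (auto simp: eventually_at)
      obtain s where s: "s \<in> T z" "s < ts + d3" using near d3 by blast
      have "s \<noteq> ts" using s tsnot by auto
      moreover have "s \<ge> ts" using sge s by auto
      ultimately have "ph s z < M" using d3 s by (auto simp: dist_real_def)
      then show False using s unfolding T_def by auto
    qed
    define L where "L = glaplacian E mu (\<lambda>y. ln (v ts y)) z"
    have der: "((\<lambda>s. ph s z) has_real_derivative (L - e*K)) (at ts)"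
    proof -
      have d0: "((\<lambda>s. v s z) has_real_derivative L) (at ts)" using v_eq tspos unfolding L_def by blast
      have "((\<lambda>s. v s z - e * (r z + K * s + 1)) has_real_derivative (L - e * (0 + K * 1 + 0))) (at ts)"
        by (intro DERIV_diff DERIV_cmult DERIV_add DERIV_const d0 DERIV_ident)
      then show ?thesis unfolding ph_def by simp
    qed
    have Lge: "L - e*K \<ge> 0"
    proof (rule ccontr)
      assume "\<not> ?thesis"  hence "L - e*K < 0" by simp
      from DERIV_neg_dec_right[OF der this] obtain d4 where
        d4: "d4>0" "\<forall>h>0. h < d4 \<longrightarrow> ph (ts+h) z < ph ts z" by blast
      obtain s where s: "s\<in>T z" "s < ts + d4" using near d4 by blast
      have "s \<noteq> ts" using s tsnot by auto
      hence "s > ts" using sge[OF s(1)] by linarith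
      hence "ph (ts + (s - ts)) z < ph ts z" using d4(2)[rule_format, of "s - ts"] s by linarith
      then show False using s allle[of z] unfolding T_def by auto
    qed
    have rnn: "r y \<ge> 0" for y unfolding r_def by simp
    have vz: "v ts z \<ge> M" using ge unfolding ph_def using rnn[of z] Kpos tspos e
      by (smt (verit) mult_pos_pos mult_nonneg_nonneg)
    have vzpos: "v ts z > 0" using vz Mpos by auto
    have vpos: "v ts y > 0" for y using v_pos tspos by auto
    have nb: "ln (v ts y) - ln (v ts z) \<le> e * (r y - r z) / v ts z" for y
    proof -
      have "ph ts y \<le> ph ts z" using allle[of y] ge by auto
      hence diff: "v ts y - v ts z \<le> e*(r y - r z)" unfolding ph_def by (simp add: algebra_simps)
      have "ln (v ts y) - ln (v ts z) = ln (v ts y / v ts z)"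
        using vpos[of y] vzpos by (simp add: ln_div)
      also have "\<dots> \<le> v ts y / v ts z - 1" using vpos[of y] vzpos by (intro ln_le_minus_one) auto
      also have "\<dots> = (v ts y - v ts z) / v ts z" using vzpos by (simp add: field_simps)
      also have "\<dots> \<le> e * (r y - r z) / v ts z" using diff vzpos by (intro divide_right_mono) auto
      finally show ?thesis .
    qed
    have "L = (1 / wdeg E mu z) * (\<Sum>y\<in>{y. E z y}. mu z y * (ln (v ts y) - ln (v ts z)))"
      unfolding L_def glaplacian_def by simp
    also have "\<dots> \<le> (1 / wdeg E mu z) * (\<Sum>y\<in>{y. E z y}. mu z y * (e * (r y - r z) / v ts z))"
    proof (rule mult_left_mono)
      show "(\<Sum>y\<in>{y. E z y}. mu z y * (ln (v ts y) - ln (v ts z))) \<le> (\<Sum>y\<in>{y. E z y}. mu z y * (e * (r y - r z) / v ts z))"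
      proof (rule sum_mono)
        fix y assume "y \<in> {y. E z y}"
        hence "mu z y \<ge> 0" using mu_nonneg by auto
        then show "mu z y * (ln (v ts y) - ln (v ts z)) \<le> mu z y * (e * (r y - r z) / v ts z)"
          using nb[of y] by (rule mult_left_mono[rotated])
      qed
      show "0 \<le> 1 / wdeg E mu z" using dpos[rule_format, of z] by simp
    qed
    also have "\<dots> = (e / v ts z) * ((1 / wdeg E mu z) * (\<Sum>y\<in>{y. E z y}. mu z y * (r y - r z)))"
    proof -
      have "(\<Sum>y\<in>{y. E z y}. mu z y * (e * (r y - r z) / v ts z)) = (e / v ts z) * (\<Sum>y\<in>{y. E z y}. mu z y * (r y - r z))"
        unfolding sum_distrib_left by (rule sum.cong) (use vzpos in \<open>simp_all add: field_simps\<close>)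
      then show ?thesis by simp
    qed
    also have "\<dots> = (e / v ts z) * mean_curv E mu x0 z"
      unfolding mean_curv_def glaplacian_def r_def by simp
    also have "\<dots> \<le> (e / v ts z) * C" using C e vzpos by (intro mult_left_mono) auto
    also have "\<dots> \<le> (e / M) * C" using C e vz Mpos
      by (intro mult_right_mono divide_left_mono) auto
    finally have "L \<le> e * C / M" by simp
    hence "L - e*K \<le> - e" unfolding K_def using Mpos by (simp add: field_simps)
    then show False using Lge e by auto
  qed
  show ?thesis
  proof (intro allI impI)
    fix t :: real assume t: "t \<ge> 0"
    have "v t x \<le> M" for x
    proof (rule field_le_epsilon)
      fix e :: real assume e: "e > 0"
      define A where "A = r x + K*t + 1"
      have A: "A > 0" unfolding A_def r_def using Kpos t by (simp add: add_nonneg_pos)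
      have "v t x \<le> M + (e/A) * A" using key[of "e/A" t x] e A t unfolding A_def by auto
      then show "v t x \<le> M + e" using A by simp
    qed
    then show "(SUP x. v t x) \<le> (SUP x. v0 x)" unfolding M_def[symmetric]
      by (intro cSUP_least) auto
  qed
qed

end
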